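(* Let $d\in\{1,2\}$ and $N\ge1$. Then $$E_Q(K(N)^2)=\sum_{n=0}^N\ \sum_{1\le i_1<\cdots<i_n\le N}c^{2n}_{N,d}\sum_{x_1,\dots,x_n\in\mathbb{Z}^d}\ \prod_{k=1}^n p_0^2(i_k-i_{k-1},x_k-x_{k-1})\left(\sum_{x\in\mathbb{Z}^d}|x|^2p_0(N-i_n,x-x_n)\right)^2,$$ with the conventions $i_0=0$, $x_0=0$.
   Context: $P^N_0$ is the uniform probability measure on nearest-neighbour walks $\omega:\{0,\dots,N\}\to\mathbb{Z}^d$ with $\omega(0)=0$, $|\omega(n)-\omega(n-1)|=1$; $p_0(n,x)$ is the probability that simple random walk on $\mathbb{Z}^d$ started at $0$ is at $x$ at time $n$. The environment $h=\{h(n,x)\}$ is i.i.d. with $h(n,x)=\pm1$ each with probability $1/2$ on $(H,\mathcal{G},Q)$, independent of the walk; $E_Q$ is expectation under $Q$. $c_{N,d}>0$ are the scaling constants (with $\lim c_{N,1}^2N^{1/2}=0$ for $d=1$, $\lim c_{N,2}^2\log N=0$ for $d=2$). $K(N)=\int\prod_{n=1}^N[1+c_{N,d}h(n,\omega(n))]\,|\omega(N)|^2\,dP^N_0(\omega)$. *)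

theory Defs
  imports "HOL-Probability.Probability"
begin

text \<open>Points of Z^d are modelled as int ^ 'd, with d = CARD('d).\<close>

definition sqnorm :: "int ^ 'd \<Rightarrow> real" where
  "sqnorm x = (\<Sum>j\<in>UNIV. real_of_int ((x $ j)^2))"

text \<open>Nearest-neighbour walks of length N started at 0, as functions on nat
  that are frozen at 0 after time N (so the set is finite).\<close>
definition walks :: "nat \<Rightarrow> (nat \<Rightarrow> int ^ 'd) set" where
  "walks N = {\<omega>. \<omega> 0 = 0 \<and> (\<forall>n\<in>{1..N}. sqnorm (\<omega> n - \<omega> (n - 1)) = 1)
                  \<and> (\<forall>n>N. \<omega> n = 0)}"

definition P0 :: "nat \<Rightarrow> (nat \<Rightarrow> int ^ 'd) pmf" where
  "P0 N = pmf_of_set (walks N)"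

definition p0 :: "nat \<Rightarrow> int ^ 'd \<Rightarrow> real" where
  "p0 n x = measure_pmf.prob (P0 n) {\<omega>. \<omega> n = x}"

definition Q :: "(nat \<times> (int ^ 'd) \<Rightarrow> real) measure" where
  "Q = PiM UNIV (\<lambda>_. measure_pmf (pmf_of_set {-1, 1}))"

definition K :: "real \<Rightarrow> nat \<Rightarrow> (nat \<times> (int ^ 'd) \<Rightarrow> real) \<Rightarrow> real" where
  "K cN N h = measure_pmf.expectation (P0 N)
      (\<lambda>\<omega>. (\<Prod>n=1..N. 1 + cN * h (n, \<omega> n)) * sqnorm (\<omega> N))"

definition incr_seqs :: "nat \<Rightarrow> nat \<Rightarrow> (nat \<Rightarrow> nat) set" where
  "incr_seqs N n = {i. i 0 = 0 \<and> (\<forall>k\<in>{1..n}. i (k - 1) < i k) \<and> i n \<le> N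
                      \<and> (\<forall>k>n. i k = 0)}"

definition pt_seqs :: "nat \<Rightarrow> (nat \<Rightarrow> int ^ 'd) set" where
  "pt_seqs n = {x. x 0 = 0 \<and> (\<forall>k>n. x k = 0)}"

end

theory Submission
  imports Defs
begin


definition cat :: "nat \<Rightarrow> nat \<Rightarrow> (nat \<Rightarrow> 'a::ab_group_add) \<Rightarrow> (nat \<Rightarrow> 'a) \<Rightarrow> nat \<Rightarrow> 'a" where
  "cat a b \<omega> \<eta> = (\<lambda>k. if k \<le> a then \<omega> k else if k \<le> a + b then \<omega> a + \<eta> (k - a) else 0)"
definition trunc :: "nat \<Rightarrow> (nat \<Rightarrow> 'a::ab_group_add) \<Rightarrow> nat \<Rightarrow> 'a" where
  "trunc a \<omega> = (\<lambda>k. if k \<le> a then \<omega> k else 0)"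
definition tl' :: "nat \<Rightarrow> nat \<Rightarrow> (nat \<Rightarrow> 'a::ab_group_add) \<Rightarrow> nat \<Rightarrow> 'a" where
  "tl' a b \<omega> = (\<lambda>k. if k \<le> b then \<omega> (a + k) - \<omega> a else 0)"

lemma walksD: "\<omega> \<in> walks N \<Longrightarrow> \<omega> 0 = 0 \<and> (\<forall>n\<in>{1..N}. sqnorm (\<omega> n - \<omega> (n - 1)) = 1) \<and> (\<forall>n>N. \<omega> n = 0)"
  by (simp add: walks_def)

lemma cat_walks:
  assumes "\<omega> \<in> walks a" "\<eta> \<in> walks b"
  shows "cat a b \<omega> \<eta> \<in> walks (a + b)"
proof -
  have w: "\<omega> 0 = 0" "\<And>n. n\<in>{1..a} \<Longrightarrow> sqnorm (\<omega> n - \<omega> (n - 1)) = 1" "\<And>n. n > a \<Longrightarrow> \<omega> n = 0"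
    using walksD[OF assms(1)] by auto
  have e: "\<eta> 0 = 0" "\<And>n. n\<in>{1..b} \<Longrightarrow> sqnorm (\<eta> n - \<eta> (n - 1)) = 1" "\<And>n. n > b \<Longrightarrow> \<eta> n = 0"
    using walksD[OF assms(2)] by auto
  have "sqnorm (cat a b \<omega> \<eta> n - cat a b \<omega> \<eta> (n - 1)) = 1" if n: "n \<in> {1..a+b}" for n
  proof (cases "n \<le> a")
    case True thus ?thesis using w(2)[of n] n by (simp add: cat_def)
  next
    case False
    hence "cat a b \<omega> \<eta> n - cat a b \<omega> \<eta> (n - 1) = \<eta> (n - a) - \<eta> (n - a - 1)"
    proof (cases "n = Suc a")
      case True thus ?thesis using n e(1) by (simp add: cat_def)
    next
      case False2: False thus ?thesis using n False by (auto simp: cat_def)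
    qed
    moreover have "n - a - 1 = (n - a) - 1" by simp
    moreover have "n - a \<in> {1..b}" using n False by auto
    ultimately show ?thesis using e(2)[of "n - a"] by simp
  qed
  thus ?thesis using w(1) by (auto simp: walks_def cat_def)
qed

lemma trunc_walks: "\<omega> \<in> walks (a + b) \<Longrightarrow> trunc a \<omega> \<in> walks a"
  by (auto simp: walks_def trunc_def)

lemma tl_walks:
  assumes "\<omega> \<in> walks (a + b)" shows "tl' a b \<omega> \<in> walks b"
proof -
  have w: "\<omega> 0 = 0" "\<And>n. n\<in>{1..a+b} \<Longrightarrow> sqnorm (\<omega> n - \<omega> (n - 1)) = 1"
    using walksD[OF assms(1)] by auto
  have "sqnorm (tl' a b \<omega> n - tl' a b \<omega> (n - 1)) = 1" if n: "n \<in> {1..b}" for n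
  proof -
    have "tl' a b \<omega> n - tl' a b \<omega> (n - 1) = \<omega> (a + n) - \<omega> (a + n - 1)"
      using n by (auto simp: tl'_def)
    thus ?thesis using w(2)[of "a+n"] n by simp
  qed
  thus ?thesis by (auto simp: walks_def tl'_def)
qed

lemma cat_inv:
  fixes \<omega> \<eta> :: "nat \<Rightarrow> int ^ 'd"
  assumes A: "\<omega> \<in> walks a" "\<eta> \<in> walks b"
  shows "(trunc a (cat a b \<omega> \<eta>), tl' a b (cat a b \<omega> \<eta>)) = (\<omega>, \<eta>)"
proof -
    have w: "\<And>n. n > a \<Longrightarrow> \<omega> n = 0" using walksD[OF A(1)] by auto
    have e: "\<eta> 0 = 0" "\<And>n. n > b \<Longrightarrow> \<eta> n = 0" using walksD[OF A(2)] by auto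
    have "trunc a (cat a b \<omega> \<eta>) = \<omega>" using w by (auto simp: fun_eq_iff trunc_def cat_def)
    moreover have "tl' a b (cat a b \<omega> \<eta>) = \<eta>" using e by (auto simp: fun_eq_iff tl'_def cat_def)
    ultimately show ?thesis by simp
qed

lemma cat_tr:
  fixes \<omega> :: "nat \<Rightarrow> int ^ 'd" assumes A: "\<omega> \<in> walks (a+b)"
  shows "cat a b (trunc a \<omega>) (tl' a b \<omega>) = \<omega>"
proof (rule ext)
  have w: "\<And>n. n > a + b \<Longrightarrow> \<omega> n = 0" using walksD[OF A(1)] by auto
  fix k show "cat a b (trunc a \<omega>) (tl' a b \<omega>) k = \<omega> k"
    using w[of k] by (cases "k \<le> a"; cases "k \<le> a + b") (auto simp: tl'_def cat_def trunc_def)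
qed

lemma cat_bij: "bij_betw (\<lambda>(\<omega>,\<eta>). cat a b \<omega> \<eta>) ((walks a :: (nat \<Rightarrow> int ^ 'd) set) \<times> walks b) (walks (a + b))"
proof (rule bij_betw_byWitness[where f' = "\<lambda>\<omega>. (trunc a \<omega>, tl' a b \<omega>)"])
  show "\<forall>x\<in>(walks a :: (nat \<Rightarrow> int ^ 'd) set) \<times> walks b. (\<lambda>\<omega>. (trunc a \<omega>, tl' a b \<omega>)) ((\<lambda>(\<omega>, \<eta>). cat a b \<omega> \<eta>) x) = x"
    using cat_inv by fastforce
  show "\<forall>y\<in>walks (a + b). (\<lambda>(\<omega>, \<eta>). cat a b \<omega> \<eta>) (trunc a y, tl' a b y) = y"
    using cat_tr by auto
  show "(\<lambda>(\<omega>, \<eta>). cat a b \<omega> \<eta>) ` (walks a \<times> walks b) \<subseteq> walks (a + b)"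
    using cat_walks by auto
  show "(\<lambda>\<omega>. (trunc a \<omega>, tl' a b \<omega>)) ` walks (a + b) \<subseteq> walks a \<times> walks b"
    using trunc_walks tl_walks by auto
qed

lemma cat_trunc: "\<omega> \<in> walks a \<Longrightarrow> trunc a (cat a b \<omega> \<eta>) = \<omega>"
  using walksD[of \<omega> a] by (auto simp: fun_eq_iff trunc_def cat_def)

lemma cat_end: "\<omega> \<in> walks a \<Longrightarrow> \<eta> \<in> walks b \<Longrightarrow> cat a b \<omega> \<eta> (a + b) = \<omega> a + \<eta> b"
  by (cases "b = 0") (auto simp: cat_def walks_def)

lemma split_sum:
  fixes F :: "(nat \<Rightarrow> int ^ 'd) \<Rightarrow> real" and G :: "int ^ 'd \<Rightarrow> real"
  shows "(\<Sum>\<omega>\<in>walks (a + b). F (trunc a \<omega>) * G (\<omega> (a + b))) =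
         (\<Sum>\<omega>\<in>walks a. F \<omega> * (\<Sum>\<eta>\<in>(walks b :: (nat \<Rightarrow> int ^ 'd) set). G (\<omega> a + \<eta> b)))"
proof -
  have "(\<Sum>\<omega>\<in>walks (a + b). F (trunc a \<omega>) * G (\<omega> (a + b))) =
     (\<Sum>p\<in>walks a \<times> (walks b :: (nat \<Rightarrow> int ^ 'd) set). F (trunc a (cat a b (fst p) (snd p))) * G (cat a b (fst p) (snd p) (a + b)))"
    by (subst sum.reindex_bij_betw[OF cat_bij, symmetric]) (simp add: case_prod_beta)
  also have "\<dots> = (\<Sum>p\<in>walks a \<times> (walks b :: (nat \<Rightarrow> int ^ 'd) set). F (fst p) * G (fst p a + snd p b))"
    by (rule sum.cong) (auto simp: cat_trunc cat_end mem_Times_iff)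
  also have "\<dots> = (\<Sum>\<omega>\<in>walks a. \<Sum>\<eta>\<in>(walks b :: (nat \<Rightarrow> int ^ 'd) set). F \<omega> * G (\<omega> a + \<eta> b))"
    by (subst sum.cartesian_product) (simp add: case_prod_beta)
  finally show ?thesis by (simp add: sum_distrib_left)
qed

lemma sqnorm_coord: assumes "sqnorm (v :: int ^ 'd) = 1" shows "v $ j \<in> {-1,0,1}"
proof -
  have "real_of_int ((v $ j)^2) \<le> (\<Sum>j\<in>UNIV. real_of_int ((v $ j)^2))"
    by (rule member_le_sum) auto
  hence "real_of_int ((v $ j)^2) \<le> 1" using assms by (simp add: sqnorm_def)
  hence "(v $ j)^2 \<le> 1" by linarith
  hence "\<bar>v $ j\<bar> \<le> 1" by (simp add: abs_square_le_1)
  thus ?thesis by auto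
qed

lemma finite_units: "finite {v :: int ^ 'd. \<forall>j. v $ j \<in> {-1,0,1}}"
proof -
  have "finite (vec_nth -` (PiE UNIV (\<lambda>_::'d. {-1,0,1::int})))"
    by (rule finite_vimageI) (auto intro: finite_PiE simp: inj_def vec_eq_iff)
  moreover have "vec_nth -` (PiE UNIV (\<lambda>_::'d. {-1,0,1::int})) = {v :: int ^ 'd. \<forall>j. v $ j \<in> {-1,0,1}}"
    by (auto simp: PiE_UNIV_domain)
  ultimately show ?thesis by simp
qed

lemma finite_walks1: "finite (walks 1 :: (nat \<Rightarrow> int ^ 'd) set)"
proof -
  have "(walks 1 :: (nat \<Rightarrow> int ^ 'd) set) \<subseteq> (\<lambda>v k. if k = 1 then v else 0) ` {v :: int ^ 'd. \<forall>j. v $ j \<in> {-1,0,1}}"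
  proof
    fix \<omega> :: "nat \<Rightarrow> int ^ 'd" assume A: "\<omega> \<in> walks 1"
    hence w: "\<omega> 0 = 0" "sqnorm (\<omega> 1) = 1" "\<And>n. n > 1 \<Longrightarrow> \<omega> n = 0"
      using walksD[OF A] by auto
    have "\<omega> = (\<lambda>k. if k = 1 then \<omega> 1 else 0)"
    proof
      fix k show "\<omega> k = (if k = 1 then \<omega> 1 else 0)" using w by (cases k) auto
    qed
    moreover have "\<forall>j. \<omega> 1 $ j \<in> {-1,0,1}" using sqnorm_coord[OF w(2)] by blast
    ultimately show "\<omega> \<in> (\<lambda>v k. if k = 1 then v else 0) ` {v :: int ^ 'd. \<forall>j. v $ j \<in> {-1,0,1}}"
      by blast
  qed
  thus ?thesis using finite_units finite_subset by blast
qed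

lemma walks1_ne: "(walks 1 :: (nat \<Rightarrow> int ^ 'd) set) \<noteq> {}"
proof -
  define e :: "int ^ 'd" where "e = (\<chi> j. if j = undefined then 1 else 0)"
  have "(\<Sum>j\<in>UNIV. real_of_int ((e$j)^2)) = (\<Sum>j\<in>(UNIV::'d set). if j = undefined then 1 else 0)"
    unfolding e_def by (intro sum.cong) auto
  hence "sqnorm e = 1" by (simp add: sqnorm_def)
  hence "(\<lambda>k. if k = 1 then e else 0) \<in> walks 1" by (auto simp: walks_def)
  thus ?thesis by blast
qed

lemma walks0: "walks 0 = {\<lambda>_. 0}"
  by (auto simp: walks_def fun_eq_iff) (metis neq0_conv)

lemma walks_Suc_img: "(walks (m + b) :: (nat \<Rightarrow> int ^ 'd) set) = (\<lambda>(\<omega>,\<eta>). cat m b \<omega> \<eta>) ` (walks m \<times> walks b)"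
  using cat_bij[of m b, where 'd='d] by (simp add: bij_betw_def)

lemma finite_walks: "finite (walks m :: (nat \<Rightarrow> int ^ 'd) set)"
proof (induction m)
  case 0 thus ?case by (simp add: walks0)
next
  case (Suc m)
  have "finite ((\<lambda>(\<omega>,\<eta>). cat m 1 \<omega> \<eta>) ` ((walks m :: (nat \<Rightarrow> int ^ 'd) set) \<times> walks 1))"
    using Suc finite_walks1 by auto
  thus ?case using walks_Suc_img[of m 1, where 'd='d] by simp
qed

lemma walks_ne: "(walks m :: (nat \<Rightarrow> int ^ 'd) set) \<noteq> {}"
proof (induction m)
  case 0 thus ?case by (simp add: walks0)
next
  case (Suc m)
  thus ?case using walks_Suc_img[of m 1, where 'd='d] walks1_ne by (simp add: image_is_empty)
qed

lemma card_walks_pos: "card (walks m :: (nat \<Rightarrow> int ^ 'd) set) > 0"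
  using finite_walks walks_ne card_gt_0_iff by blast

lemma card_walks_add: "card (walks (a + b) :: (nat \<Rightarrow> int ^ 'd) set) = card (walks a :: (nat \<Rightarrow> int ^ 'd) set) * card (walks b :: (nat \<Rightarrow> int ^ 'd) set)"
  using bij_betw_same_card[OF cat_bij[of a b, where 'd='d]] by (simp add: card_cartesian_product)



definition cnt :: "nat \<Rightarrow> int ^ 'd \<Rightarrow> real" where
  "cnt m z = (\<Sum>\<eta>\<in>(walks m :: (nat \<Rightarrow> int ^ 'd) set). if \<eta> m = z then 1 else 0)"

lemma incr_mono:
  fixes i :: "nat \<Rightarrow> nat" and j k n :: nat
  shows "\<forall>k\<in>{1..n}. i (k - 1) < (i k :: nat) \<Longrightarrow> j \<le> k \<Longrightarrow> k \<le> n \<Longrightarrow> i j \<le> i k"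
proof (induction k)
  case 0 thus ?case by simp
next
  case (Suc k)
  show ?case
  proof (cases "j = Suc k")
    case True thus ?thesis by simp
  next
    case False
    hence "i j \<le> i k" using Suc by simp
    moreover have "i k < i (Suc k)" using Suc(2) Suc(4) by (metis atLeastAtMost_iff diff_Suc_1 le_add1 plus_1_eq_Suc)
    ultimately show ?thesis by simp
  qed
qed

lemma markov:
  fixes i :: "nat \<Rightarrow> nat" and x :: "nat \<Rightarrow> int ^ 'd" and \<phi> :: "int ^ 'd \<Rightarrow> real"
  assumes "i 0 = 0" "\<forall>k\<in>{1..n}. i (k - 1) < i k" "i n \<le> M" "x 0 = 0"
  shows "(\<Sum>\<omega>\<in>(walks M :: (nat \<Rightarrow> int ^ 'd) set). (if \<forall>k\<in>{1..n}. \<omega> (i k) = x k then 1 else 0) * \<phi> (\<omega> M))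
       = (\<Prod>k=1..n. cnt (i k - i (k - 1)) (x k - x (k - 1))) *
         (\<Sum>\<eta>\<in>(walks (M - i n) :: (nat \<Rightarrow> int ^ 'd) set). \<phi> (x n + \<eta> (M - i n)))"
  using assms(2,3)
proof (induction n arbitrary: M \<phi>)
  case 0 thus ?case using assms(1,4) by simp
next
  case (Suc n)
  define m where "m = i (Suc n)"
  have mono: "\<And>k. k \<le> Suc n \<Longrightarrow> i k \<le> m" unfolding m_def using incr_mono[OF Suc(2)] by blast
  have Mm: "M = m + (M - m)" using Suc(3) m_def by simp
  define F where "F = (\<lambda>\<omega> :: nat \<Rightarrow> int ^ 'd. (if \<forall>k\<in>{1..Suc n}. \<omega> (i k) = x k then 1 else 0 :: real))"
  define S where "S = (\<lambda>z. \<Sum>\<eta>\<in>(walks (M - m) :: (nat \<Rightarrow> int ^ 'd) set). \<phi> (z + \<eta> (M - m)))"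
  have Ftr: "F (trunc m \<omega>) = F \<omega>" for \<omega>
    unfolding F_def trunc_def using mono by (intro if_cong) (auto intro!: ball_cong)
  have "(\<Sum>\<omega>\<in>(walks M :: (nat \<Rightarrow> int ^ 'd) set). (if \<forall>k\<in>{1..Suc n}. \<omega> (i k) = x k then 1 else 0) * \<phi> (\<omega> M))
      = (\<Sum>\<omega>\<in>(walks (m + (M - m)) :: (nat \<Rightarrow> int ^ 'd) set). F (trunc m \<omega>) * \<phi> (\<omega> (m + (M - m))))"
    unfolding Ftr using Mm[symmetric] by (simp add: F_def)
  also have "\<dots> = (\<Sum>\<omega>\<in>(walks m :: (nat \<Rightarrow> int ^ 'd) set). F \<omega> * S (\<omega> m))"
    unfolding S_def by (rule split_sum)
  also have "\<dots> = (\<Sum>\<omega>\<in>(walks m :: (nat \<Rightarrow> int ^ 'd) set).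
      (if \<forall>k\<in>{1..n}. \<omega> (i k) = x k then 1 else 0) * (if \<omega> m = x (Suc n) then 1 else 0) * S (x (Suc n)))"
  proof (rule sum.cong)
    fix \<omega> :: "nat \<Rightarrow> int ^ 'd"
    have "{1..Suc n} = insert (Suc n) {1..n}" by auto
    thus "F \<omega> * S (\<omega> m) = (if \<forall>k\<in>{1..n}. \<omega> (i k) = x k then 1 else 0) * (if \<omega> m = x (Suc n) then 1 else 0) * S (x (Suc n))"
      unfolding F_def m_def by auto
  qed simp
  also have "\<dots> = (\<Sum>\<omega>\<in>(walks m :: (nat \<Rightarrow> int ^ 'd) set).
      (if \<forall>k\<in>{1..n}. \<omega> (i k) = x k then 1 else 0) * (if \<omega> m = x (Suc n) then 1 else 0)) * S (x (Suc n))"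
    by (simp add: sum_distrib_right)
  also have "(\<Sum>\<omega>\<in>(walks m :: (nat \<Rightarrow> int ^ 'd) set).
      (if \<forall>k\<in>{1..n}. \<omega> (i k) = x k then 1 else 0) * (if \<omega> m = x (Suc n) then 1 else 0))
    = (\<Prod>k=1..n. cnt (i k - i (k - 1)) (x k - x (k - 1))) *
         (\<Sum>\<eta>\<in>(walks (m - i n) :: (nat \<Rightarrow> int ^ 'd) set). (if x n + \<eta> (m - i n) = x (Suc n) then 1 else 0))"
    using Suc.IH[of m "\<lambda>z. if z = x (Suc n) then 1 else 0"] Suc.prems mono[of n] by simp
  also have "(\<Sum>\<eta>\<in>(walks (m - i n) :: (nat \<Rightarrow> int ^ 'd) set). (if x n + \<eta> (m - i n) = x (Suc n) then 1 else 0))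
     = cnt (i (Suc n) - i (Suc n - 1)) (x (Suc n) - x (Suc n - 1))"
    unfolding cnt_def m_def by (intro sum.cong) (auto simp: algebra_simps)
  finally show ?case unfolding S_def m_def by (simp add: prod.cl_ivl_Suc algebra_simps)
qed



abbreviation "\<nu> \<equiv> measure_pmf (pmf_of_set {-1, 1::real})"

lemma Q_pps: "product_prob_space (\<lambda>_::(nat \<times> (int ^ 'd)). \<nu>)"
  by (rule product_prob_spaceI) (simp add: measure_pmf.prob_space_axioms)

lemma Qprod:
  fixes J :: "(nat \<times> (int ^ 'd)) set" and f :: "(nat \<times> (int ^ 'd)) \<Rightarrow> real \<Rightarrow> real"
  assumes J: "finite J"
  shows "(\<integral>h. (\<Prod>j\<in>J. f j (h j)) \<partial>(Q :: (nat \<times> (int ^ 'd) \<Rightarrow> real) measure)) = (\<Prod>j\<in>J. \<integral>t. f j t \<partial>\<nu>)"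
proof -
  interpret P: product_prob_space "\<lambda>_::(nat \<times> (int ^ 'd)). \<nu>" UNIV using Q_pps by (simp add: product_prob_space_def)
  have "(\<integral>h. (\<Prod>j\<in>J. f j (h j)) \<partial>(Q :: (nat \<times> (int ^ 'd) \<Rightarrow> real) measure))
      = (\<integral>h. (\<Prod>j\<in>J. f j (h j)) \<partial>(distr Q (PiM J (\<lambda>_. \<nu>)) (\<lambda>x. restrict x J)))"
    unfolding Q_def
    by (subst integral_distr) (auto intro!: measurable_restrict measurable_component_singleton borel_measurable_prod
        measurable_compose[OF measurable_component_singleton, where g = "f _"])
  also have "\<dots> = (\<integral>h. (\<Prod>j\<in>J. f j (h j)) \<partial>(PiM J (\<lambda>_. \<nu>)))"
    unfolding Q_def by (subst P.distr_PiM_restrict_finite) (use J in auto)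
  also have "\<dots> = (\<Prod>j\<in>J. \<integral>t. f j t \<partial>\<nu>)"
    by (rule P.product_integral_prod[OF J]) (auto intro: integrable_measure_pmf_finite)
  finally show ?thesis .
qed

lemma Qprod_int:
  fixes J :: "(nat \<times> (int ^ 'd)) set" and f :: "(nat \<times> (int ^ 'd)) \<Rightarrow> real \<Rightarrow> real"
  assumes J: "finite J"
  shows "integrable (Q :: (nat \<times> (int ^ 'd) \<Rightarrow> real) measure) (\<lambda>h. \<Prod>j\<in>J. f j (h j))"
proof -
  interpret P: product_prob_space "\<lambda>_::(nat \<times> (int ^ 'd)). \<nu>" UNIV using Q_pps by (simp add: product_prob_space_def)
  have m: "(\<lambda>h. \<Prod>j\<in>J. f j (h j)) \<in> borel_measurable (PiM J (\<lambda>_. \<nu>))"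
    by (auto intro!: borel_measurable_prod measurable_compose[OF measurable_component_singleton, where g = "f _"])
  have "integrable (PiM J (\<lambda>_. \<nu>)) (\<lambda>h. \<Prod>j\<in>J. f j (h j))"
    by (rule P.product_integrable_prod[OF J]) (auto intro: integrable_measure_pmf_finite)
  hence "integrable (distr Q (PiM J (\<lambda>_. \<nu>)) (\<lambda>x. restrict x J)) (\<lambda>h. \<Prod>j\<in>J. f j (h j))"
    unfolding Q_def by (subst P.distr_PiM_restrict_finite) (use J in auto)
  hence "integrable Q (\<lambda>x. (\<lambda>h. \<Prod>j\<in>J. f j (h j)) (restrict x J))"
    unfolding Q_def by (subst (asm) integrable_distr_eq) (auto intro!: measurable_restrict measurable_component_singleton m)
  thus ?thesis by simp
qed

lemma prod_ext_filter:
  fixes F :: "'a \<Rightarrow> real"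
  assumes "finite J" "J1 \<subseteq> J"
  shows "(\<Prod>j\<in>J1. F j) = (\<Prod>j\<in>J. if j \<in> J1 then F j else 1)"
proof -
  have "(\<Prod>j\<in>J. if j \<in> J1 then F j else 1) = (\<Prod>j\<in>{j\<in>J. j \<in> J1}. F j)"
    using assms(1) by (simp add: prod.inter_filter)
  also have "{j\<in>J. j \<in> J1} = J1" using assms(2) by auto
  finally show ?thesis by simp
qed

lemma Qpair_int:
  fixes \<omega> \<omega>' :: "nat \<Rightarrow> int ^ 'd" and c :: real
  shows "integrable (Q :: (nat \<times> (int ^ 'd) \<Rightarrow> real) measure)
    (\<lambda>h. (\<Prod>n=1..N. 1 + c * h (n, \<omega> n)) * (\<Prod>n=1..N. 1 + c * h (n, \<omega>' n)))"
proof -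
  define J1 where "J1 = (\<lambda>n. (n, \<omega> n)) ` {1..N}"
  define J2 where "J2 = (\<lambda>n. (n, \<omega>' n)) ` {1..N}"
  define J where "J = J1 \<union> J2"
  have fJ: "finite J" unfolding J_def J1_def J2_def by auto
  define g where "g = (\<lambda>j (t::real). (if j \<in> J1 then 1 + c * t else 1) * (if j \<in> J2 then 1 + c * t else 1))"
  have inj1: "inj_on (\<lambda>n. (n, \<omega> n)) {1..N}" and inj2: "inj_on (\<lambda>n. (n, \<omega>' n)) {1..N}"
    by (auto simp: inj_on_def)
  have e1: "(\<Prod>n=1..N. 1 + c * h (n, \<omega> n)) = (\<Prod>j\<in>J. if j \<in> J1 then 1 + c * h j else 1)" for h :: "nat \<times> (int ^ 'd) \<Rightarrow> real"
  proof -
    have "(\<Prod>n=1..N. 1 + c * h (n, \<omega> n)) = (\<Prod>j\<in>J1. 1 + c * h j)"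
      unfolding J1_def by (subst prod.reindex[OF inj1]) simp
    also have "\<dots> = (\<Prod>j\<in>J. if j \<in> J1 then 1 + c * h j else 1)"
      by (rule prod_ext_filter[OF fJ]) (auto simp: J_def)
    finally show ?thesis .
  qed
  have e2: "(\<Prod>n=1..N. 1 + c * h (n, \<omega>' n)) = (\<Prod>j\<in>J. if j \<in> J2 then 1 + c * h j else 1)" for h :: "nat \<times> (int ^ 'd) \<Rightarrow> real"
  proof -
    have "(\<Prod>n=1..N. 1 + c * h (n, \<omega>' n)) = (\<Prod>j\<in>J2. 1 + c * h j)"
      unfolding J2_def by (subst prod.reindex[OF inj2]) simp
    also have "\<dots> = (\<Prod>j\<in>J. if j \<in> J2 then 1 + c * h j else 1)"
      by (rule prod_ext_filter[OF fJ]) (auto simp: J_def)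
    finally show ?thesis .
  qed
  have "(\<lambda>h. (\<Prod>n=1..N. 1 + c * h (n, \<omega> n)) * (\<Prod>n=1..N. 1 + c * h (n, \<omega>' n)))
     = (\<lambda>h::nat \<times> (int ^ 'd) \<Rightarrow> real. \<Prod>j\<in>J. g j (h j))"
    unfolding e1 e2 g_def by (simp add: prod.distrib)
  thus ?thesis using Qprod_int[OF fJ, of g] by simp
qed

lemma Qpair:
  fixes \<omega> \<omega>' :: "nat \<Rightarrow> int ^ 'd" and c :: real
  shows "(\<integral>h. (\<Prod>n=1..N. 1 + c * h (n, \<omega> n)) * (\<Prod>n=1..N. 1 + c * h (n, \<omega>' n))
     \<partial>(Q :: (nat \<times> (int ^ 'd) \<Rightarrow> real) measure)) = (\<Prod>n=1..N. if \<omega> n = \<omega>' n then 1 + c^2 else 1)"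
proof -
  define J1 where "J1 = (\<lambda>n. (n, \<omega> n)) ` {1..N}"
  define J2 where "J2 = (\<lambda>n. (n, \<omega>' n)) ` {1..N}"
  define J where "J = J1 \<union> J2"
  have fJ: "finite J" unfolding J_def J1_def J2_def by auto
  define g where "g = (\<lambda>j (t::real). (if j \<in> J1 then 1 + c * t else 1) * (if j \<in> J2 then 1 + c * t else 1))"
  have inj1: "inj_on (\<lambda>n. (n, \<omega> n)) {1..N}" and inj2: "inj_on (\<lambda>n. (n, \<omega>' n)) {1..N}"
    by (auto simp: inj_on_def)
  have e1: "(\<Prod>n=1..N. 1 + c * h (n, \<omega> n)) = (\<Prod>j\<in>J. if j \<in> J1 then 1 + c * h j else 1)" for h :: "nat \<times> (int ^ 'd) \<Rightarrow> real"
  proof -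
    have "(\<Prod>n=1..N. 1 + c * h (n, \<omega> n)) = (\<Prod>j\<in>J1. 1 + c * h j)"
      unfolding J1_def by (subst prod.reindex[OF inj1]) simp
    also have "\<dots> = (\<Prod>j\<in>J. if j \<in> J1 then 1 + c * h j else 1)"
      by (rule prod_ext_filter[OF fJ]) (auto simp: J_def)
    finally show ?thesis .
  qed
  have e2: "(\<Prod>n=1..N. 1 + c * h (n, \<omega>' n)) = (\<Prod>j\<in>J. if j \<in> J2 then 1 + c * h j else 1)" for h :: "nat \<times> (int ^ 'd) \<Rightarrow> real"
  proof -
    have "(\<Prod>n=1..N. 1 + c * h (n, \<omega>' n)) = (\<Prod>j\<in>J2. 1 + c * h j)"
      unfolding J2_def by (subst prod.reindex[OF inj2]) simp
    also have "\<dots> = (\<Prod>j\<in>J. if j \<in> J2 then 1 + c * h j else 1)"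
      by (rule prod_ext_filter[OF fJ]) (auto simp: J_def)
    finally show ?thesis .
  qed
  have "(\<integral>h. (\<Prod>n=1..N. 1 + c * h (n, \<omega> n)) * (\<Prod>n=1..N. 1 + c * h (n, \<omega>' n))
     \<partial>(Q :: (nat \<times> (int ^ 'd) \<Rightarrow> real) measure)) = (\<integral>h. (\<Prod>j\<in>J. g j (h j)) \<partial>(Q :: (nat \<times> (int ^ 'd) \<Rightarrow> real) measure))"
    unfolding e1 e2 g_def by (simp add: prod.distrib)
  also have "\<dots> = (\<Prod>j\<in>J. \<integral>t. g j t \<partial>\<nu>)" by (rule Qprod[OF fJ])
  also have "\<dots> = (\<Prod>j\<in>J. if j \<in> J1 then (if j \<in> J2 then 1 + c^2 else 1) else 1)"
  proof (rule prod.cong)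
    fix j
    have "(\<integral>t. g j t \<partial>\<nu>) = (g j (-1) + g j 1) / 2"
      by (subst integral_pmf_of_set) auto
    thus "(\<integral>t. g j t \<partial>\<nu>) = (if j \<in> J1 then (if j \<in> J2 then 1 + c^2 else 1) else 1)"
      by (auto simp: g_def power2_eq_square algebra_simps)
  qed simp
  also have "\<dots> = (\<Prod>j\<in>J1. if j \<in> J2 then 1 + c^2 else 1)"
    by (rule prod_ext_filter[OF fJ, symmetric]) (auto simp: J_def)
  also have "\<dots> = (\<Prod>n=1..N. if (n, \<omega> n) \<in> J2 then 1 + c^2 else 1)"
    unfolding J1_def by (subst prod.reindex[OF inj1]) simp
  also have "\<dots> = (\<Prod>n=1..N. if \<omega> n = \<omega>' n then 1 + c^2 else 1)"
    by (rule prod.cong) (auto simp: J2_def)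
  finally show ?thesis .
qed



lemma K_eq:
  "K c N h = (\<Sum>\<omega>\<in>(walks N :: (nat \<Rightarrow> int ^ 'd) set). (\<Prod>n=1..N. 1 + c * h (n, \<omega> n)) * sqnorm (\<omega> N)) / real (card (walks N :: (nat \<Rightarrow> int ^ 'd) set))"
  unfolding K_def P0_def
  by (subst integral_pmf_of_set) (use finite_walks walks_ne in auto)

lemma LHS:
  fixes c :: real
  shows "(\<integral>h. (K c N h)^2 \<partial>(Q :: (nat \<times> (int ^ 'd) \<Rightarrow> real) measure)) =
    (\<Sum>\<omega>\<in>(walks N :: (nat \<Rightarrow> int ^ 'd) set). \<Sum>\<omega>'\<in>(walks N :: (nat \<Rightarrow> int ^ 'd) set).
       (\<Prod>n=1..N. if \<omega> n = \<omega>' n then 1 + c^2 else 1) * (sqnorm (\<omega> N) * sqnorm (\<omega>' N) / (real (card (walks N :: (nat \<Rightarrow> int ^ 'd) set)))^2))"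
proof -
  define W where "W = (walks N :: (nat \<Rightarrow> int ^ 'd) set)"
  define w where "w = real (card W)"
  define A where "A = (\<lambda>(\<omega>::nat \<Rightarrow> int ^ 'd) (h :: nat \<times> (int ^ 'd) \<Rightarrow> real). \<Prod>n=1..N. 1 + c * h (n, \<omega> n))"
  have Ksq: "(K c N h)^2 = (\<Sum>\<omega>\<in>W. \<Sum>\<omega>'\<in>W. (A \<omega> h * A \<omega>' h) * (sqnorm (\<omega> N) * sqnorm (\<omega>' N) / w^2))" for h
  proof -
    have "(K c N h)^2 = ((\<Sum>\<omega>\<in>W. A \<omega> h * sqnorm (\<omega> N)) / w)^2"
      unfolding K_eq W_def w_def A_def ..
    also have "\<dots> = (\<Sum>\<omega>\<in>W. A \<omega> h * sqnorm (\<omega> N)) * (\<Sum>\<omega>'\<in>W. A \<omega>' h * sqnorm (\<omega>' N)) / w^2"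
      by (simp add: power2_eq_square)
    also have "\<dots> = (\<Sum>\<omega>\<in>W. \<Sum>\<omega>'\<in>W. (A \<omega> h * sqnorm (\<omega> N)) * (A \<omega>' h * sqnorm (\<omega>' N))) / w^2"
      by (simp add: sum_product)
    also have "\<dots> = (\<Sum>\<omega>\<in>W. \<Sum>\<omega>'\<in>W. (A \<omega> h * A \<omega>' h) * (sqnorm (\<omega> N) * sqnorm (\<omega>' N) / w^2))"
      by (simp add: sum_divide_distrib algebra_simps)
    finally show ?thesis .
  qed
  have int: "integrable (Q :: (nat \<times> (int ^ 'd) \<Rightarrow> real) measure) (\<lambda>h. A \<omega> h * A \<omega>' h)" for \<omega> \<omega>'
    unfolding A_def by (rule Qpair_int)
  have "(\<integral>h. (K c N h)^2 \<partial>(Q :: (nat \<times> (int ^ 'd) \<Rightarrow> real) measure)) =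
     (\<integral>h. (\<Sum>\<omega>\<in>W. \<Sum>\<omega>'\<in>W. (A \<omega> h * A \<omega>' h) * (sqnorm (\<omega> N) * sqnorm (\<omega>' N) / w^2)) \<partial>(Q :: (nat \<times> (int ^ 'd) \<Rightarrow> real) measure))"
    by (simp add: Ksq)
  also have "\<dots> = (\<Sum>\<omega>\<in>W. \<Sum>\<omega>'\<in>W. (\<integral>h. A \<omega> h * A \<omega>' h \<partial>(Q :: (nat \<times> (int ^ 'd) \<Rightarrow> real) measure)) * (sqnorm (\<omega> N) * sqnorm (\<omega>' N) / w^2))"
    using int by (simp add: integral_sum integrable_sum)
  also have "\<dots> = (\<Sum>\<omega>\<in>W. \<Sum>\<omega>'\<in>W. (\<Prod>n=1..N. if \<omega> n = \<omega>' n then 1 + c^2 else 1) * (sqnorm (\<omega> N) * sqnorm (\<omega>' N) / w^2))"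
    unfolding A_def Qpair ..
  finally show ?thesis unfolding W_def w_def .
qed

lemma prod_if_const:
  fixes a :: real
  assumes "finite A"
  shows "(\<Prod>n\<in>A. if P n then a else 0) = (if \<forall>n\<in>A. P n then a ^ card A else 0)"
proof (cases "\<forall>n\<in>A. P n")
  case True thus ?thesis by simp
next
  case False
  then obtain n where "n \<in> A" "\<not> P n" by blast
  thus ?thesis using assms by (auto intro!: prod_zero)
qed

lemma prod_expand:
  fixes a :: real and P :: "nat \<Rightarrow> bool"
  shows "(\<Prod>n=1..N. if P n then 1 + a else 1) = (\<Sum>A\<in>Pow {1..N}. a ^ card A * (if \<forall>n\<in>A. P n then 1 else 0))"
proof -
  have "(\<Prod>n=1..N. if P n then 1 + a else 1) = (\<Prod>n=1..N. (if P n then a else 0) + 1)"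
    by (rule prod.cong) auto
  also have "\<dots> = (\<Sum>A\<in>Pow {1..N}. (\<Prod>n\<in>A. if P n then a else 0) * (\<Prod>n\<in>{1..N}-A. 1))"
    by (rule prod_add) simp
  also have "\<dots> = (\<Sum>A\<in>Pow {1..N}. a ^ card A * (if \<forall>n\<in>A. P n then 1 else 0))"
    by (rule sum.cong) (auto simp: prod_if_const finite_subset)
  finally show ?thesis .
qed

lemma LHS2:
  fixes c :: real
  shows "(\<integral>h. (K c N h)^2 \<partial>(Q :: (nat \<times> (int ^ 'd) \<Rightarrow> real) measure)) =
    (\<Sum>A\<in>Pow {1..N}. c ^ (2 * card A) *
      (\<Sum>\<omega>\<in>(walks N :: (nat \<Rightarrow> int ^ 'd) set). \<Sum>\<omega>'\<in>(walks N :: (nat \<Rightarrow> int ^ 'd) set).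
       (if \<forall>n\<in>A. \<omega> n = \<omega>' n then 1 else 0) * (sqnorm (\<omega> N) * sqnorm (\<omega>' N) / (real (card (walks N :: (nat \<Rightarrow> int ^ 'd) set)))^2)))"
  unfolding LHS prod_expand
  by (simp add: sum_distrib_right sum_distrib_left sum.swap[where A = "Pow _"] power_mult mult.assoc sum_divide_distrib)



lemma p0_eq: "p0 m (z :: int ^ 'd) = cnt m z / real (card (walks m :: (nat \<Rightarrow> int ^ 'd) set))"
proof -
  have "p0 m z = real (card ((walks m :: (nat \<Rightarrow> int ^ 'd) set) \<inter> {\<omega>. \<omega> m = z})) / real (card (walks m :: (nat \<Rightarrow> int ^ 'd) set))"
    unfolding p0_def P0_def by (subst measure_pmf_of_set) (use finite_walks walks_ne in auto)
  moreover have "cnt m z = real (card ((walks m :: (nat \<Rightarrow> int ^ 'd) set) \<inter> {\<omega>. \<omega> m = z}))"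
    unfolding cnt_def using finite_walks[of m, where 'd='d] by (simp flip: of_bool_def)
  ultimately show ?thesis by simp
qed

lemma infsum_p0:
  "(\<Sum>\<^sub>\<infinity>y\<in>UNIV. sqnorm y * p0 m (y - a)) =
   (\<Sum>\<eta>\<in>(walks m :: (nat \<Rightarrow> int ^ 'd) set). sqnorm (a + \<eta> m)) / real (card (walks m :: (nat \<Rightarrow> int ^ 'd) set))"
proof -
  define W where "W = (walks m :: (nat \<Rightarrow> int ^ 'd) set)"
  define Y where "Y = (\<lambda>\<eta>. a + \<eta> m) ` W"
  have fW: "finite W" unfolding W_def by (rule finite_walks)
  have fY: "finite Y" unfolding Y_def using fW by simp
  have t: "sqnorm y * p0 m (y - a) = (\<Sum>\<eta>\<in>W. if a + \<eta> m = y then sqnorm y else 0) / real (card W)" for y :: "int ^ 'd"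
  proof -
    have "sqnorm y * p0 m (y - a) = sqnorm y * (\<Sum>\<eta>\<in>W. if \<eta> m = y - a then 1 else 0) / real (card W)"
      unfolding p0_eq cnt_def W_def by simp
    also have "\<dots> = (\<Sum>\<eta>\<in>W. if a + \<eta> m = y then sqnorm y else 0) / real (card W)"
      by (simp add: sum_distrib_left algebra_simps if_distrib eq_diff_eq cong: if_cong)
    finally show ?thesis .
  qed
  have "(\<Sum>\<^sub>\<infinity>y\<in>UNIV. sqnorm y * p0 m (y - a)) = (\<Sum>\<^sub>\<infinity>y\<in>Y. sqnorm y * p0 m (y - a))"
  proof (rule infsum_cong_neutral)
    fix y assume "y \<in> UNIV - Y"
    hence "\<forall>\<eta>\<in>W. a + \<eta> m \<noteq> y" unfolding Y_def by auto
    thus "sqnorm y * p0 m (y - a) = 0" unfolding t by simp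
  qed auto
  also have "\<dots> = (\<Sum>y\<in>Y. sqnorm y * p0 m (y - a))" using fY by simp
  also have "\<dots> = (\<Sum>y\<in>Y. \<Sum>\<eta>\<in>W. if a + \<eta> m = y then sqnorm y else 0) / real (card W)"
    unfolding t by (simp add: sum_divide_distrib)
  also have "\<dots> = (\<Sum>\<eta>\<in>W. \<Sum>y\<in>Y. if a + \<eta> m = y then sqnorm y else 0) / real (card W)"
    by (subst sum.swap) simp
  also have "\<dots> = (\<Sum>\<eta>\<in>W. sqnorm (a + \<eta> m)) / real (card W)"
    using fY by (intro arg_cong[where f = "\<lambda>t. t / _"] sum.cong) (auto simp: Y_def)
  finally show ?thesis unfolding W_def .
qed

lemma card_prod:
  fixes i :: "nat \<Rightarrow> nat"
  assumes "\<forall>k\<in>{1..n}. i (k - 1) < i k" "i n \<le> M" and i0: "i 0 = 0"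
  shows "real (card (walks M :: (nat \<Rightarrow> int ^ 'd) set)) =
    (\<Prod>k=1..n. real (card (walks (i k - i (k - 1)) :: (nat \<Rightarrow> int ^ 'd) set))) * real (card (walks (M - i n) :: (nat \<Rightarrow> int ^ 'd) set))"
  using assms(1,2)
proof (induction n arbitrary: M)
  case 0 thus ?case using i0 by simp
next
  case (Suc n)
  have "i n < i (Suc n)" using Suc.prems(1) by force
  hence le: "i n \<le> i (Suc n)" by simp
  have IH: "real (card (walks (i (Suc n)) :: (nat \<Rightarrow> int ^ 'd) set)) =
    (\<Prod>k=1..n. real (card (walks (i k - i (k - 1)) :: (nat \<Rightarrow> int ^ 'd) set))) * real (card (walks (i (Suc n) - i n) :: (nat \<Rightarrow> int ^ 'd) set))"
    using Suc.IH[OF _ le] Suc.prems(1) by simp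
  have "M = i (Suc n) + (M - i (Suc n))" using Suc.prems(2) by simp
  hence "real (card (walks M :: (nat \<Rightarrow> int ^ 'd) set)) = real (card (walks (i (Suc n)) :: (nat \<Rightarrow> int ^ 'd) set)) * real (card (walks (M - i (Suc n)) :: (nat \<Rightarrow> int ^ 'd) set))"
    by (metis card_walks_add of_nat_mult)
  thus ?case unfolding IH by (simp add: prod.cl_ivl_Suc)
qed

lemma key_term:
  fixes i :: "nat \<Rightarrow> nat" and x :: "nat \<Rightarrow> int ^ 'd"
  assumes iI: "i \<in> incr_seqs N n" and xI: "x \<in> pt_seqs n"
  shows "(\<Prod>k=1..n. (p0 (i k - i (k - 1)) (x k - x (k - 1)))^2) *
          (\<Sum>\<^sub>\<infinity>y\<in>UNIV. sqnorm y * p0 (N - i n) (y - x n))^2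
    = (\<Sum>\<omega>\<in>(walks N :: (nat \<Rightarrow> int ^ 'd) set). (if \<forall>k\<in>{1..n}. \<omega> (i k) = x k then 1 else 0) * sqnorm (\<omega> N))^2
       / (real (card (walks N :: (nat \<Rightarrow> int ^ 'd) set)))^2"
proof -
  have i0: "i 0 = 0" and inc: "\<forall>k\<in>{1..n}. i (k - 1) < i k" and iN: "i n \<le> N"
    using iI by (auto simp: incr_seqs_def)
  have x0: "x 0 = 0" using xI by (simp add: pt_seqs_def)
  define cg where "cg = (\<lambda>k. real (card (walks (i k - i (k - 1)) :: (nat \<Rightarrow> int ^ 'd) set)))"
  define cr where "cr = real (card (walks (N - i n) :: (nat \<Rightarrow> int ^ 'd) set))"
  define cn where "cn = (\<lambda>k. cnt (i k - i (k - 1)) (x k - x (k - 1)) :: real)"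
  define S where "S = (\<Sum>\<eta>\<in>(walks (N - i n) :: (nat \<Rightarrow> int ^ 'd) set). sqnorm (x n + \<eta> (N - i n)))"
  have M: "(\<Sum>\<omega>\<in>(walks N :: (nat \<Rightarrow> int ^ 'd) set). (if \<forall>k\<in>{1..n}. \<omega> (i k) = x k then 1 else 0) * sqnorm (\<omega> N))
     = (\<Prod>k=1..n. cn k) * S"
    unfolding cn_def S_def by (rule markov[of i n N x, OF i0 inc iN x0])
  have C: "real (card (walks N :: (nat \<Rightarrow> int ^ 'd) set)) = (\<Prod>k=1..n. cg k) * cr"
    unfolding cg_def cr_def by (rule card_prod[of n i N, OF inc iN i0])
  have "(\<Prod>k=1..n. (p0 (i k - i (k - 1)) (x k - x (k - 1)))^2) = ((\<Prod>k=1..n. cn k) / (\<Prod>k=1..n. cg k))^2"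
    unfolding cn_def cg_def p0_eq by (simp add: prod_power_distrib[symmetric] prod_dividef power_divide)
  moreover have "(\<Sum>\<^sub>\<infinity>y\<in>UNIV. sqnorm y * p0 (N - i n) (y - x n)) = S / cr"
    unfolding S_def cr_def by (rule infsum_p0)
  ultimately show ?thesis unfolding M C by (simp add: power_divide power_mult_distrib)
qed



lemma sq_group:
  fixes W :: "'a set" and \<pi> :: "'a \<Rightarrow> 'b" and s :: "'a \<Rightarrow> real"
  assumes fW: "finite W"
  shows "(\<Sum>x\<in>\<pi> ` W. (\<Sum>\<omega>\<in>W. (if \<pi> \<omega> = x then 1 else 0) * s \<omega>)^2) =
         (\<Sum>\<omega>\<in>W. \<Sum>\<omega>'\<in>W. (if \<pi> \<omega> = \<pi> \<omega>' then 1 else 0) * (s \<omega> * s \<omega>'))"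
proof -
  have "(\<Sum>x\<in>\<pi> ` W. (\<Sum>\<omega>\<in>W. (if \<pi> \<omega> = x then 1 else 0) * s \<omega>)^2) =
     (\<Sum>x\<in>\<pi> ` W. \<Sum>\<omega>\<in>W. \<Sum>\<omega>'\<in>W. (if \<pi> \<omega> = x \<and> \<pi> \<omega>' = x then s \<omega> * s \<omega>' else 0))"
    by (simp add: power2_eq_square sum_product if_distrib cong: if_cong) (auto intro!: sum.cong)
  also have "\<dots> = (\<Sum>\<omega>\<in>W. \<Sum>\<omega>'\<in>W. \<Sum>x\<in>\<pi> ` W. (if \<pi> \<omega> = x \<and> \<pi> \<omega>' = x then s \<omega> * s \<omega>' else 0))"
    by (subst sum.swap) (simp add: sum.swap[where A = "\<pi> ` W"])
  also have "\<dots> = (\<Sum>\<omega>\<in>W. \<Sum>\<omega>'\<in>W. (if \<pi> \<omega> = \<pi> \<omega>' then 1 else 0) * (s \<omega> * s \<omega>'))"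
  proof (intro sum.cong refl)
    fix \<omega> \<omega>' assume "\<omega> \<in> W" "\<omega>' \<in> W"
    have "(\<Sum>x\<in>\<pi> ` W. (if \<pi> \<omega> = x \<and> \<pi> \<omega>' = x then s \<omega> * s \<omega>' else 0))
        = (\<Sum>x\<in>\<pi> ` W. (if x = \<pi> \<omega> then (if \<pi> \<omega> = \<pi> \<omega>' then s \<omega> * s \<omega>' else 0) else 0))"
      by (intro sum.cong) auto
    also have "\<dots> = (if \<pi> \<omega> = \<pi> \<omega>' then 1 else 0) * (s \<omega> * s \<omega>')"
      using fW \<open>\<omega> \<in> W\<close> by (subst sum.delta) auto
    finally show "(\<Sum>x\<in>\<pi> ` W. (if \<pi> \<omega> = x \<and> \<pi> \<omega>' = x then s \<omega> * s \<omega>' else 0)) = (if \<pi> \<omega> = \<pi> \<omega>' then 1 else 0) * (s \<omega> * s \<omega>')" .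
  qed
  finally show ?thesis .
qed

lemma R_eq_T:
  fixes i :: "nat \<Rightarrow> nat"
  assumes iI: "i \<in> incr_seqs N n"
  shows "(\<Sum>\<^sub>\<infinity>x\<in>(pt_seqs n :: (nat \<Rightarrow> int ^ 'd) set).
          (\<Prod>k=1..n. (p0 (i k - i (k - 1)) (x k - x (k - 1)))^2) *
          (\<Sum>\<^sub>\<infinity>y\<in>UNIV. sqnorm y * p0 (N - i n) (y - x n))^2)
    = (\<Sum>\<omega>\<in>(walks N :: (nat \<Rightarrow> int ^ 'd) set). \<Sum>\<omega>'\<in>(walks N :: (nat \<Rightarrow> int ^ 'd) set).
       (if \<forall>a\<in>i ` {1..n}. \<omega> a = \<omega>' a then 1 else 0) * (sqnorm (\<omega> N) * sqnorm (\<omega>' N) / (real (card (walks N :: (nat \<Rightarrow> int ^ 'd) set)))^2))"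
proof -
  define W where "W = (walks N :: (nat \<Rightarrow> int ^ 'd) set)"
  define w where "w = real (card W)"
  define \<pi> where "\<pi> = (\<lambda>(\<omega>::nat \<Rightarrow> int ^ 'd) k. if k \<in> {1..n} then \<omega> (i k) else 0)"
  have fW: "finite W" unfolding W_def by (rule finite_walks)
  have piP: "\<pi> \<omega> \<in> pt_seqs n" for \<omega> unfolding \<pi>_def pt_seqs_def by auto
  have piI: "(\<forall>k\<in>{1..n}. \<omega> (i k) = x k) \<longleftrightarrow> \<pi> \<omega> = x" if "x \<in> pt_seqs n" for \<omega> x
  proof -
    have x: "x 0 = 0" "\<And>k. k > n \<Longrightarrow> x k = 0" using that by (auto simp: pt_seqs_def)
    show ?thesis
    proof
      assume "\<forall>k\<in>{1..n}. \<omega> (i k) = x k"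
      thus "\<pi> \<omega> = x" using x unfolding \<pi>_def
        by (intro ext) (metis atLeastAtMost_iff le_numeral_extra(2) less_one not_le)
    qed (auto simp: \<pi>_def)
  qed
  define f where "f = (\<lambda>x. (\<Sum>\<omega>\<in>W. (if \<pi> \<omega> = x then 1 else 0) * sqnorm (\<omega> N))^2 / w^2)"
  have "(\<Sum>\<^sub>\<infinity>x\<in>(pt_seqs n :: (nat \<Rightarrow> int ^ 'd) set).
          (\<Prod>k=1..n. (p0 (i k - i (k - 1)) (x k - x (k - 1)))^2) *
          (\<Sum>\<^sub>\<infinity>y\<in>UNIV. sqnorm y * p0 (N - i n) (y - x n))^2) = (\<Sum>\<^sub>\<infinity>x\<in>pt_seqs n. f x)"
  proof (rule infsum_cong)
    fix x :: "nat \<Rightarrow> int ^ 'd" assume x: "x \<in> pt_seqs n"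
    show "(\<Prod>k=1..n. (p0 (i k - i (k - 1)) (x k - x (k - 1)))^2) *
          (\<Sum>\<^sub>\<infinity>y\<in>UNIV. sqnorm y * p0 (N - i n) (y - x n))^2 = f x"
      unfolding key_term[OF iI x] f_def W_def w_def using piI[OF x] by simp
  qed
  also have "\<dots> = (\<Sum>\<^sub>\<infinity>x\<in>\<pi> ` W. f x)"
  proof (rule infsum_cong_neutral)
    fix x assume "x \<in> pt_seqs n - \<pi> ` W"
    hence "\<forall>\<omega>\<in>W. \<pi> \<omega> \<noteq> x" by auto
    thus "f x = 0" unfolding f_def by simp
  qed (use piP in auto)
  also have "\<dots> = (\<Sum>x\<in>\<pi> ` W. f x)" using fW by simp
  also have "\<dots> = (\<Sum>\<omega>\<in>W. \<Sum>\<omega>'\<in>W. (if \<pi> \<omega> = \<pi> \<omega>' then 1 else 0) * (sqnorm (\<omega> N) * sqnorm (\<omega>' N))) / w^2"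
    unfolding f_def sum_divide_distrib[symmetric] sq_group[OF fW] ..
  also have "\<dots> = (\<Sum>\<omega>\<in>W. \<Sum>\<omega>'\<in>W. (if \<forall>a\<in>i ` {1..n}. \<omega> a = \<omega>' a then 1 else 0) * (sqnorm (\<omega> N) * sqnorm (\<omega>' N) / w^2))"
  proof -
    have "\<pi> \<omega> = \<pi> \<omega>' \<longleftrightarrow> (\<forall>a\<in>i ` {1..n}. \<omega> a = \<omega>' a)" for \<omega> \<omega>'
      using piI[OF piP[of \<omega>'], of \<omega>] by (auto simp: \<pi>_def)
    thus ?thesis by (simp add: sum_divide_distrib)
  qed
  finally show ?thesis unfolding W_def w_def .
qed



definition enum :: "nat \<Rightarrow> nat set \<Rightarrow> nat \<Rightarrow> nat" where
  "enum n A = (\<lambda>k. if k \<in> {1..n} then sorted_list_of_set A ! (k - 1) else 0)"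

lemma incr_strict:
  assumes "i \<in> incr_seqs N n" "j < k" "k \<le> n"
  shows "i j < i k"
proof -
  have inc: "\<forall>k\<in>{1..n}. i (k - 1) < i k" using assms(1) by (auto simp: incr_seqs_def)
  have "i j \<le> i (k - 1)" using incr_mono[OF inc, of j "k - 1"] assms by simp
  also have "i (k - 1) < i k" using inc assms by auto
  finally show ?thesis .
qed

lemma incr_img:
  assumes "i \<in> incr_seqs N n"
  shows "i ` {1..n} \<in> Pow {1..N}" "card (i ` {1..n}) = n"
proof -
  have i0: "i 0 = 0" and iN: "i n \<le> N" using assms by (auto simp: incr_seqs_def)
  show "i ` {1..n} \<in> Pow {1..N}"
  proof -
    have "1 \<le> i k \<and> i k \<le> N" if k: "1 \<le> k" "k \<le> n" for k
    proof -
      have "i 0 < i k" using incr_strict[OF assms, of 0 k] k by simp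
      moreover have "i k \<le> i n" using incr_strict[OF assms, of k n] k by (cases "k = n") auto
      ultimately show ?thesis using i0 iN by simp
    qed
    thus ?thesis by auto
  qed
  have "inj_on i {1..n}"
    by (rule inj_onI) (metis atLeastAtMost_iff incr_strict[OF assms] less_irrefl nat_neq_iff)
  thus "card (i ` {1..n}) = n" by (simp add: card_image)
qed

lemma incr_sorted:
  assumes "i \<in> incr_seqs N n"
  shows "sorted_list_of_set (i ` {1..n}) = map i [1..<Suc n]"
proof -
  have "sorted_wrt (<) (map i [1..<Suc n])"
    unfolding sorted_wrt_iff_nth_less using incr_strict[OF assms] by (auto simp del: upt_Suc simp: nth_upt)
  moreover have "set (map i [1..<Suc n]) = i ` {1..n}" by auto
  moreover have "length (map i [1..<Suc n]) = card (i ` {1..n})" using incr_img(2)[OF assms] by simp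
  moreover have "finite (i ` {1..n})" by simp
  ultimately show ?thesis using sorted_list_of_set_unique[of "i ` {1..n}" "map i [1..<Suc n]"] by blast
qed

lemma enum_img_inv:
  assumes "i \<in> incr_seqs N n"
  shows "enum n (i ` {1..n}) = i"
proof
  fix k
  have i0: "i 0 = 0" and iz: "\<And>k. k > n \<Longrightarrow> i k = 0" using assms by (auto simp: incr_seqs_def)
  show "enum n (i ` {1..n}) k = i k"
  proof (cases "k \<in> {1..n}")
    case True
    hence "map i [1..<Suc n] ! (k - 1) = i k" by (subst nth_map) (auto simp del: upt_Suc simp: nth_upt)
    thus ?thesis using True unfolding enum_def incr_sorted[OF assms] by simp
  next
    case False
    hence "k = 0 \<or> k > n" by auto
    thus ?thesis using False i0 iz unfolding enum_def by auto
  qed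
qed

lemma enum_props:
  assumes A: "A \<in> Pow {1..N}" and cA: "card A = n"
  shows "enum n A \<in> incr_seqs N n" "enum n A ` {1..n} = A"
proof -
  define xs where "xs = sorted_list_of_set A"
  have fA: "finite A" using A finite_subset by auto
  have sw: "sorted_wrt (<) xs" and len: "length xs = n" and st: "set xs = A"
    unfolding xs_def using cA fA by auto
  have inA: "k < n \<Longrightarrow> xs ! k \<in> A" for k using st len by auto
  have "enum n A ` {1..n} = (\<lambda>k. xs ! (k - 1)) ` {1..n}"
    unfolding enum_def xs_def by auto
  also have "\<dots> = set xs"
  proof -
    have "(\<lambda>k. xs ! (k - 1)) ` {1..n} = (\<lambda>k. xs ! k) ` {0..<n}"
    proof -
      have e: "{1..n} = Suc ` {0..<n}" by (simp add: image_Suc_atLeastLessThan atLeastLessThanSuc_atLeastAtMost)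
      show ?thesis unfolding e image_image by simp
    qed
    also have "\<dots> = set xs" using len by (auto simp: set_conv_nth)
    finally show ?thesis .
  qed
  finally show "enum n A ` {1..n} = A" using st by simp
  have step: "enum n A (k - 1) < enum n A k" if k: "k \<in> {1..n}" for k
  proof (cases "k = 1")
    case True
    have "xs ! 0 \<in> A" using inA k by auto
    hence "xs ! 0 \<ge> 1" using A by auto
    thus ?thesis using True k unfolding enum_def xs_def by auto
  next
    case False
    hence "xs ! (k - 2) < xs ! (k - 1)" using sorted_wrt_nth_less[OF sw, of "k - 2" "k - 1"] k len by auto
    moreover have "k - 1 - 1 = k - 2" by simp
    ultimately show ?thesis using False k unfolding enum_def xs_def by auto
  qed
  have last: "enum n A n \<le> N"
  proof (cases "n = 0")
    case True thus ?thesis by (simp add: enum_def)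
  next
    case False
    hence "xs ! (n - 1) \<in> A" using inA by auto
    thus ?thesis using A False unfolding enum_def xs_def by auto
  qed
  show "enum n A \<in> incr_seqs N n"
    unfolding incr_seqs_def using step last by (auto simp: enum_def)
qed

lemma incr_bij: "bij_betw (\<lambda>i. i ` {1..n}) (incr_seqs N n) {A \<in> Pow {1..N}. card A = n}"
proof (rule bij_betw_byWitness[where f' = "enum n"])
  show "\<forall>a\<in>incr_seqs N n. enum n (a ` {1..n}) = a" using enum_img_inv by blast
  show "\<forall>a'\<in>{A \<in> Pow {1..N}. card A = n}. enum n a' ` {1..n} = a'" using enum_props(2) by blast
  show "(\<lambda>i. i ` {1..n}) ` incr_seqs N n \<subseteq> {A \<in> Pow {1..N}. card A = n}" using incr_img by blast
  show "enum n ` {A \<in> Pow {1..N}. card A = n} \<subseteq> incr_seqs N n" using enum_props(1) by blast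
qed



theorem lemma3:
  fixes c :: "nat \<Rightarrow> real" and N :: nat
  assumes dim: "CARD('d) \<in> {1, 2}"
    and cpos: "\<And>M. c M > 0"
    and scal1: "CARD('d) = 1 \<Longrightarrow> (\<lambda>M. (c M)^2 * sqrt (real M)) \<longlonglongrightarrow> 0"
    and scal2: "CARD('d) = 2 \<Longrightarrow> (\<lambda>M. (c M)^2 * ln (real M)) \<longlonglongrightarrow> 0"
    and N: "N \<ge> 1"
  shows "(\<integral>h. (K (c N) N h)^2 \<partial>(Q :: (nat \<times> (int ^ 'd) \<Rightarrow> real) measure)) =
    (\<Sum>n=0..N. \<Sum>i\<in>incr_seqs N n. (c N)^(2*n) *
       (\<Sum>\<^sub>\<infinity>x\<in>(pt_seqs n :: (nat \<Rightarrow> int ^ 'd) set).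
          (\<Prod>k=1..n. (p0 (i k - i (k - 1)) (x k - x (k - 1)))^2) *
          (\<Sum>\<^sub>\<infinity>y\<in>UNIV. sqnorm y * p0 (N - i n) (y - x n))^2))"
proof -
  define G where "G = (\<lambda>A. c N ^ (2 * card A) *
      (\<Sum>\<omega>\<in>(walks N :: (nat \<Rightarrow> int ^ 'd) set). \<Sum>\<omega>'\<in>(walks N :: (nat \<Rightarrow> int ^ 'd) set).
       (if \<forall>n\<in>A. \<omega> n = \<omega>' n then 1 else 0) * (sqnorm (\<omega> N) * sqnorm (\<omega>' N) / (real (card (walks N :: (nat \<Rightarrow> int ^ 'd) set)))^2)))"
  have "(\<Sum>n=0..N. \<Sum>i\<in>incr_seqs N n. (c N)^(2*n) *
       (\<Sum>\<^sub>\<infinity>x\<in>(pt_seqs n :: (nat \<Rightarrow> int ^ 'd) set).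
          (\<Prod>k=1..n. (p0 (i k - i (k - 1)) (x k - x (k - 1)))^2) *
          (\<Sum>\<^sub>\<infinity>y\<in>UNIV. sqnorm y * p0 (N - i n) (y - x n))^2))
     = (\<Sum>n=0..N. \<Sum>i\<in>incr_seqs N n. G (i ` {1..n}))"
  proof (intro sum.cong refl)
    fix n i assume i: "i \<in> incr_seqs N n"
    show "(c N)^(2*n) *
       (\<Sum>\<^sub>\<infinity>x\<in>(pt_seqs n :: (nat \<Rightarrow> int ^ 'd) set).
          (\<Prod>k=1..n. (p0 (i k - i (k - 1)) (x k - x (k - 1)))^2) *
          (\<Sum>\<^sub>\<infinity>y\<in>UNIV. sqnorm y * p0 (N - i n) (y - x n))^2) = G (i ` {1..n})"
      unfolding G_def R_eq_T[OF i] incr_img(2)[OF i] ..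
  qed
  also have "\<dots> = (\<Sum>n=0..N. \<Sum>A\<in>{A \<in> Pow {1..N}. card A = n}. G A)"
    by (intro sum.cong refl) (rule sum.reindex_bij_betw[OF incr_bij])
  also have "\<dots> = (\<Sum>A\<in>Pow {1..N}. G A)"
  proof (rule sum.group)
    show "card ` Pow {1..N} \<subseteq> {0..N}"
      by (auto dest: card_mono[rotated, OF _ finite_atLeastAtMost])
  qed auto
  finally show ?thesis unfolding LHS2 G_def by simp
qed


end
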